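(* Let $A \in \mathbb{R}^{m \times n_A}$ and $B \in \mathbb{R}^{m \times n_B}$, where the columns of $B$ are nonzero. Let $k \le n_B$ and let $OPT_k$ be a set of $k$ columns of $B$ maximizing $f_A(S)$ over all sets $S$ of $k$ columns of $B$, and assume $\sigma_{\min}(OPT_k) > 0$. Let $\varepsilon > 0$, and let $T_r$ be the set of columns output by $\textsc{Greedy}(A, B, r)$ for $r = \left\lceil \frac{16k}{\varepsilon\, \sigma_{\min}(OPT_k)} \right\rceil$. Then $$f_A(T_r) \ge (1-\varepsilon)\, f_A(OPT_k).$$
   Context: For a finite set $V$ of vectors in $\mathbb{R}^m$, $\Pi_V$ denotes the orthogonal projector onto $\mathrm{span}(V)$. For a matrix $M$ with $m$ rows, $f_M(V) = \|\Pi_V M\|_F^2$ (the squared Frobenius norm of the projection of $M$ onto $\mathrm{span}(V)$). For a finite set $V$ of nonzero vectors, $\sigma_{\min}(V)$ is the smallest squared singular value of the matrix whose columns are the vectors of $V$ rescaled to unit length, i.e. $\inf_{\|x\|_2=1}\|Mx\|_2^2$ for that matrix $M$. The algorithm $\textsc{Greedy}(A, B, r)$: start with $S = \emptyset$; for $i = 1, \dots, r$, pick a column $B_j$ of $B$ maximizing $f_A(S \cup \{B_j\})$ and set $S \leftarrow S \cup \{B_j\}$; return $S$. *)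

theory Defs
  imports "HOL-Analysis.Analysis"
begin

definition proj_span :: "('a::euclidean_space) set \<Rightarrow> 'a \<Rightarrow> 'a" where
  "proj_span V x = (THE y. y \<in> span V \<and> (\<forall>w\<in>span V. (x - y) \<bullet> w = 0))"

definition fM :: "real^'n^'m \<Rightarrow> (real^'m) set \<Rightarrow> real" where
  "fM M V = (\<Sum>j\<in>UNIV. (norm (proj_span V (column j M)))\<^sup>2)"

text \<open>sigma_min(V): smallest squared singular value of the matrix whose columns are
  the vectors of V normalised to unit length; coefficient vectors x are indexed by V.\<close>
definition sigma_min :: "('a::euclidean_space) set \<Rightarrow> real" where
  "sigma_min V = Inf {(norm (\<Sum>v\<in>V. x v *\<^sub>R (v /\<^sub>R norm v)))\<^sup>2 | x.
                         (\<Sum>v\<in>V. (x v)\<^sup>2) = 1}"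

definition columns :: "real^'n^'m \<Rightarrow> (real^'m) set" where
  "columns M = {column j M | j. True}"

text \<open>greedy A B i S: S is a possible state of Greedy(A,B,.) after i iterations
  (any tie-breaking among maximizers).\<close>
inductive greedy :: "real^'na^'m \<Rightarrow> real^'nb^'m \<Rightarrow> nat \<Rightarrow> (real^'m) set \<Rightarrow> bool"
  for A B where
  greedy_0: "greedy A B 0 {}"
| greedy_Suc: "greedy A B i S \<Longrightarrow>
     (\<forall>j'. fM A (insert (column j' B) S) \<le> fM A (insert (column j B) S)) \<Longrightarrow>
     greedy A B (Suc i) (insert (column j B) S)"

end

theory Submission
  imports Defs
begin


lemma proj_ex1:
  fixes V :: "'a::euclidean_space set"
  shows "\<exists>!y. y \<in> span V \<and> (\<forall>w\<in>span V. (x - y) \<bullet> w = 0)"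
proof -
  obtain y z where y: "y \<in> span V" and z: "\<And>w. w \<in> span V \<Longrightarrow> orthogonal z w" and xyz: "x = y + z"
    using orthogonal_subspace_decomp_exists by blast
  have ex: "y \<in> span V \<and> (\<forall>w\<in>span V. (x - y) \<bullet> w = 0)"
    using y z xyz by (simp add: orthogonal_def)
  show ?thesis
  proof (rule ex1I[of _ y])
    show "y \<in> span V \<and> (\<forall>w\<in>span V. (x - y) \<bullet> w = 0)" by (fact ex)
  next
    fix y' assume h: "y' \<in> span V \<and> (\<forall>w\<in>span V. (x - y') \<bullet> w = 0)"
    have d: "y' - y \<in> span V" using h y span_diff by blast
    have "(x - y) \<bullet> (y' - y) = 0" "(x - y') \<bullet> (y' - y) = 0" using ex h d by auto
    then have "(y' - y) \<bullet> (y' - y) = 0" by (simp add: inner_diff_left inner_diff_right)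
    then show "y' = y" by simp
  qed
qed

lemma proj_props:
  fixes V :: "'a::euclidean_space set"
  shows "proj_span V x \<in> span V" "\<And>w. w \<in> span V \<Longrightarrow> (x - proj_span V x) \<bullet> w = 0"
  using theI'[OF proj_ex1[where V=V and x=x]] unfolding proj_span_def by auto

lemma proj_unique:
  fixes V :: "'a::euclidean_space set"
  assumes "y \<in> span V" "\<And>w. w \<in> span V \<Longrightarrow> (x - y) \<bullet> w = 0"
  shows "proj_span V x = y"
  using proj_ex1[where V=V and x=x] proj_props[where V=V and x=x] assms by blast

lemma proj_add:
  fixes V :: "'a::euclidean_space set"
  shows "proj_span V (x + y) = proj_span V x + proj_span V y"
proof (rule proj_unique)
  show "proj_span V x + proj_span V y \<in> span V" using proj_props span_add by blast
  fix w assume "w \<in> span V"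
  then have "(x - proj_span V x) \<bullet> w = 0" "(y - proj_span V y) \<bullet> w = 0" by (simp_all add: proj_props)
  then show "(x + y - (proj_span V x + proj_span V y)) \<bullet> w = 0"
    by (simp add: inner_diff_left inner_add_left)
qed

lemma proj_inner_self:
  fixes V :: "'a::euclidean_space set"
  shows "x \<bullet> proj_span V w = proj_span V x \<bullet> proj_span V w"
proof -
  have "(x - proj_span V x) \<bullet> proj_span V w = 0" using proj_props by blast
  then show ?thesis by (simp add: inner_diff_left)
qed

lemma proj_norm_decomp:
  fixes V :: "'a::euclidean_space set"
  shows "(norm x)\<^sup>2 = (norm (proj_span V x))\<^sup>2 + (norm (x - proj_span V x))\<^sup>2"
proof -
  have "(x - proj_span V x) \<bullet> proj_span V x = 0" using proj_props by blast
  then show ?thesis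
    by (simp add: power2_norm_eq_inner inner_diff_left inner_diff_right inner_commute)
qed

lemma proj_norm_le:
  fixes V :: "'a::euclidean_space set"
  shows "norm (proj_span V x) \<le> norm x"
  using proj_norm_decomp[of x V]
  by (metis le_add_same_cancel1 norm_ge_zero power2_le_imp_le zero_le_power2)

lemma proj_lower:
  fixes V :: "'a::euclidean_space set"
  assumes "y \<in> span V"
  shows "(norm (proj_span V x))\<^sup>2 \<ge> 2 * (x \<bullet> y) - (norm y)\<^sup>2"
proof -
  have e: "(x - proj_span V x) \<bullet> y = 0" using proj_props assms by blast
  have "0 \<le> (norm (proj_span V x - y))\<^sup>2" by simp
  also have "\<dots> = (norm (proj_span V x))\<^sup>2 - 2 * (proj_span V x \<bullet> y) + (norm y)\<^sup>2"
    by (simp add: power2_norm_eq_inner inner_diff_left inner_diff_right inner_commute)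
  finally show ?thesis using e by (simp add: inner_diff_left)
qed



lemma gain_col:
  fixes S :: "'a::euclidean_space set" and v a :: 'a
  defines "u \<equiv> v /\<^sub>R norm v"
  shows "(norm (proj_span (insert v S) a))\<^sup>2 \<ge> (norm (proj_span S a))\<^sup>2 + (u \<bullet> (a - proj_span S a))\<^sup>2"
proof -
  let ?p = "proj_span S a" and ?q = "u - proj_span S u"
  define t where "t = u \<bullet> (a - ?p)"
  have nu: "norm u \<le> 1" unfolding u_def by (cases "v = 0") auto
  have sub: "span S \<subseteq> span (insert v S)" by (simp add: span_mono subset_insertI)
  have uin: "u \<in> span (insert v S)" unfolding u_def
    by (simp add: span_base span_mul)
  have pin: "?p \<in> span (insert v S)" "proj_span S u \<in> span (insert v S)" using proj_props(1) sub by blast+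
  have yin: "?p + t *\<^sub>R ?q \<in> span (insert v S)"
    using pin uin by (simp add: span_add span_diff span_mul)
  have o1: "(u - proj_span S u) \<bullet> ?p = 0" using proj_props by blast
  have o2: "(a - ?p) \<bullet> proj_span S u = 0" using proj_props by blast
  have aq: "a \<bullet> ?q = t"
    using o1 o2 unfolding t_def by (simp add: inner_diff_left inner_diff_right inner_commute)
  have ap: "a \<bullet> ?p = (norm ?p)\<^sup>2"
    using proj_inner_self[of a S a] by (simp add: power2_norm_eq_inner)
  have nq: "(norm ?q)\<^sup>2 \<le> 1"
  proof -
    have "(norm ?q)\<^sup>2 \<le> (norm u)\<^sup>2" using proj_norm_decomp[of u S] by simp
    also have "\<dots> \<le> 1" using nu by (simp add: power_le_one)
    finally show ?thesis .
  qed
  have ny: "(norm (?p + t *\<^sub>R ?q))\<^sup>2 = (norm ?p)\<^sup>2 + t\<^sup>2 * (norm ?q)\<^sup>2"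
  proof -
    have "?p \<bullet> ?q = 0" using o1 by (simp add: inner_commute)
    then show ?thesis
      unfolding power2_norm_eq_inner
      by (simp add: inner_add_left inner_add_right inner_commute algebra_simps power2_eq_square)
  qed
  have "(norm (proj_span (insert v S) a))\<^sup>2 \<ge> 2 * (a \<bullet> (?p + t *\<^sub>R ?q)) - (norm (?p + t *\<^sub>R ?q))\<^sup>2"
    by (rule proj_lower[OF yin])
  moreover have "2 * (a \<bullet> (?p + t *\<^sub>R ?q)) = 2 * (norm ?p)\<^sup>2 + 2 * t\<^sup>2"
    using aq ap by (simp add: inner_add_right power2_eq_square)
  moreover have "t\<^sup>2 * (norm ?q)\<^sup>2 \<le> t\<^sup>2" using nq by (simp add: mult_left_le)
  ultimately show ?thesis unfolding t_def[symmetric] using ny by linarith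
qed



lemma span_coeffs:
  fixes W :: "'a::euclidean_space set"
  assumes "finite W" "0 \<notin> W" "z \<in> span W"
  obtains x where "z = (\<Sum>v\<in>W. x v *\<^sub>R (v /\<^sub>R norm v))"
proof -
  obtain c where c: "z = (\<Sum>v\<in>W. c v *\<^sub>R v)" using span_finite[OF assms(1)] assms(3) by auto
  have "z = (\<Sum>v\<in>W. (c v * norm v) *\<^sub>R (v /\<^sub>R norm v))"
    unfolding c
  proof (rule sum.cong[OF refl])
    fix v assume "v \<in> W" then have "norm v \<noteq> 0" using assms(2) by auto
    then show "c v *\<^sub>R v = (c v * norm v) *\<^sub>R (v /\<^sub>R norm v)" by simp
  qed
  then show ?thesis by (rule that)
qed

lemma sigma_lower:
  fixes W :: "'a::euclidean_space set"
  assumes "finite W"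
  shows "sigma_min W * (\<Sum>v\<in>W. (x v)\<^sup>2) \<le> (norm (\<Sum>v\<in>W. x v *\<^sub>R (v /\<^sub>R norm v)))\<^sup>2"
proof (cases "(\<Sum>v\<in>W. (x v)\<^sup>2) = 0")
  case True then show ?thesis by simp
next
  case False
  let ?C = "\<Sum>v\<in>W. (x v)\<^sup>2"
  have Cpos: "?C > 0" using False by (simp add: order_le_neq_trans sum_nonneg)
  define s where "s = sqrt ?C"
  have spos: "s > 0" using Cpos s_def by simp
  have ss: "s\<^sup>2 = ?C" using Cpos s_def by simp
  define x' where "x' v = x v / s" for v
  have "(\<Sum>v\<in>W. (x' v)\<^sup>2) = (\<Sum>v\<in>W. (x v)\<^sup>2) / s\<^sup>2"
    unfolding x'_def by (simp add: power_divide sum_divide_distrib)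
  then have one: "(\<Sum>v\<in>W. (x' v)\<^sup>2) = 1" using ss Cpos by simp
  have eq: "(\<Sum>v\<in>W. x' v *\<^sub>R (v /\<^sub>R norm v)) = (1/s) *\<^sub>R (\<Sum>v\<in>W. x v *\<^sub>R (v /\<^sub>R norm v))"
    unfolding x'_def scaleR_sum_right by (simp add: divide_inverse mult_ac)
  let ?X = "{(norm (\<Sum>v\<in>W. x v *\<^sub>R (v /\<^sub>R norm v)))\<^sup>2 | x. (\<Sum>v\<in>W. (x v)\<^sup>2) = 1}"
  have mem: "(norm (\<Sum>v\<in>W. x' v *\<^sub>R (v /\<^sub>R norm v)))\<^sup>2 \<in> ?X" using one by blast
  have bdd: "bdd_below ?X" by (rule bdd_belowI[of _ 0]) auto
  have "sigma_min W \<le> (norm (\<Sum>v\<in>W. x' v *\<^sub>R (v /\<^sub>R norm v)))\<^sup>2"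
    unfolding sigma_min_def by (rule cInf_lower[OF mem bdd])
  also have "\<dots> = (norm (\<Sum>v\<in>W. x v *\<^sub>R (v /\<^sub>R norm v)))\<^sup>2 / s\<^sup>2"
    unfolding eq using spos by (simp add: power_divide)
  finally have "sigma_min W \<le> (norm (\<Sum>v\<in>W. x v *\<^sub>R (v /\<^sub>R norm v)))\<^sup>2 / ?C" using ss by simp
  then show ?thesis using Cpos by (simp add: le_divide_eq mult.commute)
qed

lemma amgm_aux:
  fixes s a b :: real
  assumes "s > 0"
  shows "a * b \<le> (s * a\<^sup>2 + b\<^sup>2 / s) / 2"
proof -
  have "0 \<le> (s * a - b)\<^sup>2" by simp
  then have "2 * s * (a * b) \<le> s * (s * a\<^sup>2) + b\<^sup>2" by (simp add: power2_eq_square algebra_simps)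
  then have "2 * (a * b) \<le> (s * (s * a\<^sup>2) + b\<^sup>2) / s" using assms
    by (simp add: le_divide_eq mult_ac)
  also have "\<dots> = s * a\<^sup>2 + b\<^sup>2 / s" using assms by (simp add: field_simps power2_eq_square)
  finally show ?thesis by simp
qed

lemma half_aux: "(a::real) \<le> (a + b) / 2 \<Longrightarrow> a \<le> b" by (simp add: field_simps)

lemma sigma_bound:
  fixes W :: "'a::euclidean_space set"
  assumes fin: "finite W" and nz: "0 \<notin> W" and sp: "sigma_min W > 0"
  shows "sigma_min W * (norm (proj_span W w))\<^sup>2 \<le> (\<Sum>v\<in>W. ((v /\<^sub>R norm v) \<bullet> w)\<^sup>2)"
proof -
  let ?s = "sigma_min W"
  let ?z = "proj_span W w"
  obtain x where zx: "?z = (\<Sum>v\<in>W. x v *\<^sub>R (v /\<^sub>R norm v))"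
    using span_coeffs[OF fin nz proj_props(1)] by blast
  have dots: "v \<bullet> w = v \<bullet> ?z" if "v \<in> W" for v
  proof -
    have "v \<in> span W" using that by (simp add: span_base)
    then have "(w - ?z) \<bullet> v = 0" using proj_props(2) by blast
    then show ?thesis by (simp add: inner_diff_left inner_diff_right inner_commute)
  qed
  let ?Q = "\<Sum>v\<in>W. ((v /\<^sub>R norm v) \<bullet> w)\<^sup>2"
  let ?C = "\<Sum>v\<in>W. (x v)\<^sup>2"
  have low: "?s * ?C \<le> (norm ?z)\<^sup>2" using sigma_lower[OF fin, of x] zx by simp
  have "(norm ?z)\<^sup>2 = ?z \<bullet> (\<Sum>v\<in>W. x v *\<^sub>R (v /\<^sub>R norm v))"
    by (metis power2_norm_eq_inner zx)
  also have "\<dots> = (\<Sum>v\<in>W. x v * ((v /\<^sub>R norm v) \<bullet> w))"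
    unfolding inner_sum_right
    by (rule sum.cong[OF refl]) (simp add: dots[symmetric] inner_commute)
  also have "\<dots> \<le> (\<Sum>v\<in>W. (?s * (x v)\<^sup>2 + ((v /\<^sub>R norm v) \<bullet> w)\<^sup>2 / ?s) / 2)"
    by (rule sum_mono) (rule amgm_aux[OF sp])
  also have "\<dots> = (?s * ?C + ?Q / ?s) / 2"
    by (simp add: sum.distrib sum_divide_distrib[symmetric] sum_distrib_left[symmetric] add_divide_distrib)
  finally have "(norm ?z)\<^sup>2 \<le> ((norm ?z)\<^sup>2 + ?Q / ?s) / 2" using low by (smt (verit) divide_right_mono)
  then have "(norm ?z)\<^sup>2 \<le> ?Q / ?s" using half_aux by blast
  then show ?thesis using sp by (simp add: le_divide_eq mult.commute)
qed



lemma sq_diff_aux: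
  fixes x y z :: real
  assumes "0 \<le> x" "0 \<le> y" "0 \<le> z" "x \<le> y + z"
  shows "x\<^sup>2 - y\<^sup>2 \<le> 2 * x * z"
proof (cases "x \<le> y")
  case True
  then have "x\<^sup>2 \<le> y\<^sup>2" using assms by (simp add: power_mono)
  moreover have "0 \<le> 2 * x * z" using assms by simp
  ultimately show ?thesis by linarith
next
  case False
  have "x\<^sup>2 - y\<^sup>2 = (x - y) * (x + y)" by (simp add: power2_eq_square algebra_simps)
  also have "\<dots> \<le> z * (x + y)" using assms False by (intro mult_right_mono) auto
  also have "\<dots> \<le> z * (2 * x)" using assms False by (intro mult_left_mono) auto
  finally show ?thesis by (simp add: mult_ac)
qed

lemma Z_bound:
  fixes A :: "real^'na^'m" and S W :: "(real^'m) set"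
  defines "F \<equiv> fM A W" and "Z \<equiv> (\<Sum>j\<in>UNIV. (norm (proj_span W (column j A - proj_span S (column j A))))\<^sup>2)"
  assumes Fpos: "F > 0" and Dpos: "F - fM A S > 0"
  shows "(F - fM A S)\<^sup>2 \<le> 4 * F * Z"
proof -
  define D where "D = F - fM A S"
  define x where "x j = norm (proj_span W (column j A))" for j
  define y where "y j = norm (proj_span S (column j A))" for j
  define z where "z j = norm (proj_span W (column j A - proj_span S (column j A)))" for j
  define t where "t = D / (2 * F)"
  have tpos: "t > 0" using Fpos Dpos unfolding t_def D_def by simp
  have xyz: "x j \<le> y j + z j" for j
  proof -
    let ?a = "column j A"
    have "proj_span W ?a = proj_span W (proj_span S ?a) + proj_span W (?a - proj_span S ?a)"
      using proj_add[of W "proj_span S ?a" "?a - proj_span S ?a"] by simp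
    then have "x j \<le> norm (proj_span W (proj_span S ?a)) + z j"
      unfolding x_def z_def by (metis norm_triangle_ineq)
    also have "norm (proj_span W (proj_span S ?a)) \<le> y j" unfolding y_def by (rule proj_norm_le)
    finally show ?thesis by simp
  qed
  have pt: "(x j)\<^sup>2 - (y j)\<^sup>2 \<le> t * (x j)\<^sup>2 + (z j)\<^sup>2 / t" for j
  proof -
    have "(x j)\<^sup>2 - (y j)\<^sup>2 \<le> 2 * x j * z j"
      by (rule sq_diff_aux) (auto simp: x_def y_def z_def xyz[unfolded x_def y_def z_def])
    also have "\<dots> \<le> t * (x j)\<^sup>2 + (z j)\<^sup>2 / t"
      using amgm_aux[OF tpos, of "x j" "z j"] by simp
    finally show ?thesis .
  qed
  have "D = (\<Sum>j\<in>UNIV. (x j)\<^sup>2 - (y j)\<^sup>2)"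
    unfolding D_def F_def fM_def x_def y_def by (simp add: sum_subtractf)
  also have "\<dots> \<le> (\<Sum>j\<in>UNIV. t * (x j)\<^sup>2 + (z j)\<^sup>2 / t)" by (rule sum_mono) (rule pt)
  also have "\<dots> = t * F + Z / t"
    unfolding F_def Z_def fM_def x_def z_def by (simp add: sum.distrib sum_distrib_left sum_divide_distrib)
  finally have "D \<le> t * F + Z / t" .
  moreover have "t * F = D / 2" unfolding t_def using Fpos by simp
  moreover have "Z / t = 2 * F * Z / D" unfolding t_def by simp
  ultimately have "D / 2 \<le> 2 * F * Z / D" by simp
  then have "D * D \<le> 4 * F * Z" using Dpos unfolding D_def[symmetric]
    by (simp add: field_simps)
  then show ?thesis unfolding D_def by (simp add: power2_eq_square)
qed



lemma gain_fM:
  fixes A :: "real^'na^'m" and S :: "(real^'m) set"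
  shows "fM A (insert v S) \<ge> fM A S + (\<Sum>j\<in>UNIV. ((v /\<^sub>R norm v) \<bullet> (column j A - proj_span S (column j A)))\<^sup>2)"
  unfolding fM_def sum.distrib[symmetric] by (rule sum_mono) (rule gain_col)

lemma gain_sum:
  fixes A :: "real^'na^'m" and S S' W :: "(real^'m) set"
  assumes fin: "finite W" and nz: "0 \<notin> W" and sp: "sigma_min W > 0"
    and best: "\<forall>v\<in>W. fM A (insert v S) \<le> fM A S'"
  shows "sigma_min W * (\<Sum>j\<in>UNIV. (norm (proj_span W (column j A - proj_span S (column j A))))\<^sup>2)
         \<le> real (card W) * (fM A S' - fM A S)"
proof -
  let ?w = "\<lambda>j. column j A - proj_span S (column j A)"
  have "sigma_min W * (\<Sum>j\<in>UNIV. (norm (proj_span W (?w j)))\<^sup>2)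
        = (\<Sum>j\<in>UNIV. sigma_min W * (norm (proj_span W (?w j)))\<^sup>2)" by (simp add: sum_distrib_left)
  also have "\<dots> \<le> (\<Sum>j\<in>UNIV. \<Sum>v\<in>W. ((v /\<^sub>R norm v) \<bullet> ?w j)\<^sup>2)"
    by (rule sum_mono) (rule sigma_bound[OF fin nz sp])
  also have "\<dots> = (\<Sum>v\<in>W. \<Sum>j\<in>UNIV. ((v /\<^sub>R norm v) \<bullet> ?w j)\<^sup>2)" by (rule sum.swap)
  also have "\<dots> \<le> (\<Sum>v\<in>W. fM A S' - fM A S)"
  proof (rule sum_mono)
    fix v assume "v \<in> W"
    then show "(\<Sum>j\<in>UNIV. ((v /\<^sub>R norm v) \<bullet> ?w j)\<^sup>2) \<le> fM A S' - fM A S"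
      using gain_fM[where A=A and v=v and S=S] best by fastforce
  qed
  also have "\<dots> = real (card W) * (fM A S' - fM A S)" by simp
  finally show ?thesis .
qed



lemma fM_nonneg: "fM A V \<ge> 0" unfolding fM_def by (rule sum_nonneg) simp

lemma fM_empty: "fM (A::real^'n^'m) {} = 0"
proof -
  have "proj_span {} x = 0" for x :: "real^'m"
    using proj_props(1)[of "{}" x] by simp
  then show ?thesis unfolding fM_def by simp
qed

lemma rec_aux:
  fixes X X' :: real and i :: nat
  assumes "X > 0" "real i * X \<le> 1" "X' \<le> X - X\<^sup>2"
  shows "real (Suc i) * X' \<le> 1"
proof -
  have "real (Suc i) * X' \<le> real (Suc i) * (X - X\<^sup>2)"
    using assms(3) by (intro mult_left_mono) auto
  also have "\<dots> \<le> 1"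
  proof (cases "X \<le> 1")
    case True
    have "0 \<le> (1 - real i * X) * (1 - X) + X\<^sup>2" using True assms(2) by simp
    then show ?thesis by (simp add: algebra_simps power2_eq_square)
  next
    case False
    then have "X - X\<^sup>2 < 0" by (simp add: power2_eq_square)
    then have "real (Suc i) * (X - X\<^sup>2) \<le> 0" by (simp add: mult_nonneg_nonpos)
    then show ?thesis by simp
  qed
  finally show ?thesis .
qed

lemma greedy_bound:
  fixes A :: "real^'na^'m" and B :: "real^'nb^'m" and OPT :: "(real^'m) set"
  assumes fin: "finite OPT" and nz: "0 \<notin> OPT" and sp: "sigma_min OPT > 0"
    and sub: "\<forall>v\<in>OPT. \<exists>j. v = column j B"
    and kpos: "card OPT > 0" and Fpos: "fM A OPT > 0"
    and g: "greedy A B i S"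
  shows "sigma_min OPT / (4 * real (card OPT) * fM A OPT) * real i * (fM A OPT - fM A S) \<le> 1"
  using g
proof (induction rule: greedy.induct)
  case greedy_0
  then show ?case by simp
next
  case (greedy_Suc i S j)
  let ?F = "fM A OPT" and ?k = "real (card OPT)" and ?s = "sigma_min OPT"
  let ?S' = "insert (column j B) S"
  define c where "c = ?s / (4 * ?k * ?F)"
  have cpos: "c > 0" unfolding c_def using sp kpos Fpos by simp
  define Z where "Z = (\<Sum>j\<in>UNIV. (norm (proj_span OPT (column j A - proj_span S (column j A))))\<^sup>2)"
  have Zn: "Z \<ge> 0" unfolding Z_def by (rule sum_nonneg) simp
  have best: "\<forall>v\<in>OPT. fM A (insert v S) \<le> fM A ?S'" using sub greedy_Suc.hyps(2) by metis
  have gs: "?s * Z \<le> ?k * (fM A ?S' - fM A S)"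
    unfolding Z_def by (rule gain_sum[OF fin nz sp best])
  have mono: "fM A S \<le> fM A ?S'"
  proof -
    have "0 \<le> ?s * Z" using sp Zn by simp
    then have "0 \<le> ?k * (fM A ?S' - fM A S)" using gs by linarith
    then show ?thesis using kpos by (simp add: zero_le_mult_iff)
  qed
  define D where "D = ?F - fM A S"
  define D' where "D' = ?F - fM A ?S'"
  have IH: "real i * (c * D) \<le> 1" using greedy_Suc.IH unfolding c_def D_def by (simp add: mult_ac)
  show ?case
  proof (cases "D > 0")
    case False
    then have "D' \<le> 0" using mono unfolding D_def D'_def by simp
    then have "c * real (Suc i) * D' \<le> 0" using cpos by (simp add: mult_nonneg_nonpos)
    then show ?thesis unfolding c_def D'_def by simp
  next
    case True
    have zb: "D\<^sup>2 \<le> 4 * ?F * Z" unfolding D_def Z_def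
      by (rule Z_bound[OF Fpos]) (use True D_def in simp)
    have "?s * D\<^sup>2 \<le> ?s * (4 * ?F * Z)" using zb sp by simp
    also have "\<dots> \<le> 4 * ?F * (?k * (D - D'))"
    proof -
      have "?s * Z \<le> ?k * (D - D')" using gs unfolding D_def D'_def by simp
      then have "4 * ?F * (?s * Z) \<le> 4 * ?F * (?k * (D - D'))" using Fpos by (intro mult_left_mono) auto
      then show ?thesis by (simp add: mult_ac)
    qed
    finally have "?s * D\<^sup>2 \<le> 4 * ?F * ?k * (D - D')" by (simp add: mult_ac)
    then have h1: "?s * D\<^sup>2 / (4 * ?k * ?F) \<le> D - D'"
      using Fpos kpos by (simp add: pos_divide_le_eq mult_ac)
    have h2: "c * (?s * D\<^sup>2 / (4 * ?k * ?F)) = (c * D)\<^sup>2"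
      unfolding c_def by (simp add: power2_eq_square)
    have "c * (?s * D\<^sup>2 / (4 * ?k * ?F)) \<le> c * (D - D')"
      using h1 cpos by (intro mult_left_mono) auto
    then have "c * D' \<le> c * D - (c * D)\<^sup>2" using h2 by (simp add: algebra_simps)
    then have "real (Suc i) * (c * D') \<le> 1"
      using rec_aux[of "c * D" i "c * D'"] True cpos IH by simp
    then show ?thesis unfolding c_def D'_def by (simp add: mult_ac)
  qed
qed

theorem theorem1:
  fixes A :: "real^'na^'m" and B :: "real^'nb^'m"
    and k :: nat and OPT T :: "(real^'m) set" and \<epsilon> :: real
  assumes "\<forall>j. column j B \<noteq> 0"
    and "k \<le> CARD('nb)"
    and "OPT \<subseteq> columns B" and "card OPT = k"
    and "\<forall>S. S \<subseteq> columns B \<and> card S = k \<longrightarrow> fM A S \<le> fM A OPT"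
    and "sigma_min OPT > 0"
    and "\<epsilon> > 0"
    and "greedy A B (nat \<lceil>16 * real k / (\<epsilon> * sigma_min OPT)\<rceil>) T"
  shows "fM A T \<ge> (1 - \<epsilon>) * fM A OPT"
proof -
  let ?s = "sigma_min OPT" and ?F = "fM A OPT"
  have colfin: "finite (columns B)" unfolding columns_def
  proof -
    have "{column j B |j. True} = range (\<lambda>j. column j B)" by auto
    then show "finite {column j B |j. True}" by simp
  qed
  have fin: "finite OPT" using assms(3) colfin finite_subset by blast
  have sub: "\<forall>v\<in>OPT. \<exists>j. v = column j B" using assms(3) unfolding columns_def by blast
  have nz: "0 \<notin> OPT" using sub assms(1) by fastforce
  have Tn: "fM A T \<ge> 0" by (rule fM_nonneg)
  show ?thesis
  proof (cases "k = 0")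
    case True
    then have "OPT = {}" using fin assms(4) by simp
    then show ?thesis using Tn fM_empty[of A] by simp
  next
    case False
    then have kpos: "card OPT > 0" using assms(4) by simp
    show ?thesis
    proof (cases "?F > 0")
      case False
      then have "?F = 0" using fM_nonneg[of A OPT] by linarith
      then show ?thesis using Tn by simp
    next
      case Fpos: True
      define r where "r = nat \<lceil>16 * real k / (\<epsilon> * ?s)\<rceil>"
      have qpos: "16 * real k / (\<epsilon> * ?s) > 0" using False assms(6,7) by simp
      have rge: "real r \<ge> 16 * real k / (\<epsilon> * ?s)"
      proof -
        have c0: "\<lceil>16 * real k / (\<epsilon> * ?s)\<rceil> \<ge> 0" using qpos by simp
        have "real r = real_of_int \<lceil>16 * real k / (\<epsilon> * ?s)\<rceil>" unfolding r_def using c0 by simp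
        then show ?thesis using le_of_int_ceiling by simp
      qed
      have rpos: "real r > 0" using rge qpos by linarith
      have gb: "?s / (4 * real (card OPT) * ?F) * real r * (?F - fM A T) \<le> 1"
        by (rule greedy_bound[OF fin nz assms(6) sub kpos Fpos]) (use assms(8) r_def in simp)
      define D where "D = ?F - fM A T"
      show ?thesis
      proof (cases "D \<le> 0")
        case True
        then have "fM A T \<ge> ?F" unfolding D_def by simp
        moreover have "(1 - \<epsilon>) * ?F \<le> ?F" using assms(7) Fpos by simp
        ultimately show ?thesis by linarith
      next
        case Dpos: False
        have K: "4 * real k * ?F > 0" using False Fpos by simp
        have "?s * real r * D \<le> 4 * real k * ?F"
          using gb K unfolding D_def assms(4) by (simp add: divide_le_eq mult_ac)
        moreover have "16 * real k / \<epsilon> * D \<le> ?s * real r * D"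
        proof -
          have "16 * real k / \<epsilon> \<le> ?s * real r" using rge assms(6,7)
            by (simp add: divide_le_eq mult_ac)
          then show ?thesis using Dpos by (intro mult_right_mono) auto
        qed
        ultimately have "16 * real k / \<epsilon> * D \<le> 4 * real k * ?F" by linarith
        then have "16 * real k * D \<le> 4 * real k * ?F * \<epsilon>" using assms(7)
          by (simp add: divide_le_eq mult_ac)
        then have "4 * D \<le> ?F * \<epsilon>" using False by (simp add: mult_ac)
        then have "4 * D \<le> \<epsilon> * ?F" by (simp add: mult_ac)
        then have "D \<le> \<epsilon> * ?F" using Dpos by linarith
        then show ?thesis unfolding D_def by (simp add: algebra_simps)
      qed
    qed
  qed
qed

end
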